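(* Let $n\ge1$ and let $\Phi:\mathbb{R}^{n+1}\to[0,+\infty)$ be a norm with dual norm $\Phi^o$. Then $\Phi(\widehat\xi,\xi_{n+1})\ge\Phi(\widehat\xi,0)$ for all $(\widehat\xi,\xi_{n+1})\in\mathbb{R}^n\times\mathbb{R}$ if and only if $\Phi^o(\widehat\xi^*,\xi^*_{n+1})\ge\Phi^o(\widehat\xi^*,0)$ for all $(\widehat\xi^*,\xi^*_{n+1})\in\mathbb{R}^n\times\mathbb{R}$.
   Context: A norm on $\mathbb{R}^m$ is a convex function $\Psi:\mathbb{R}^m\to[0,+\infty)$ with $\Psi(\lambda\xi)=|\lambda|\Psi(\xi)$ and $\Psi(\xi)\ge c|\xi|$ for some $c>0$; its dual norm is $\Psi^o(\xi^* )=\sup\{\xi^*\cdot\xi:\Psi(\xi)\le1\}$. (The stated property of $\Phi$ is what the paper calls "$\partial B_\Phi$ is a generalized graph in the vertical direction".) *)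

theory Defs
  imports "HOL-Analysis.Analysis"
begin

text \<open>We model R^(n+1) as R^n x R, i.e. the type (real^'n) \<times> real; the
  last component is the vertical coordinate. Since types are nonempty, n \<ge> 1.\<close>

definition is_norm :: "('a::euclidean_space \<Rightarrow> real) \<Rightarrow> bool" where
  "is_norm \<Psi> \<longleftrightarrow> convex_on UNIV \<Psi> \<and> (\<forall>x. \<Psi> x \<ge> 0)
     \<and> (\<forall>r x. \<Psi> (r *\<^sub>R x) = \<bar>r\<bar> * \<Psi> x)
     \<and> (\<exists>c>0. \<forall>x. \<Psi> x \<ge> c * norm x)"

definition dual_norm :: "('a::euclidean_space \<Rightarrow> real) \<Rightarrow> 'a \<Rightarrow> real" where
  "dual_norm \<Psi> xs = (SUP x\<in>{x. \<Psi> x \<le> 1}. xs \<bullet> x)"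

end

theory Submission
  imports Defs
begin

context
  fixes \<Phi> :: "'a::euclidean_space \<Rightarrow> real"
  assumes N: "is_norm \<Phi>"
begin

lemma n_nonneg: "\<Phi> x \<ge> 0" using N unfolding is_norm_def by blast

lemma n_hom: "\<Phi> (r *\<^sub>R x) = \<bar>r\<bar> * \<Phi> x" using N unfolding is_norm_def by blast

lemma n_zero: "\<Phi> 0 = 0" using n_hom[of 0 0] by simp

lemma n_pos: "x \<noteq> 0 \<Longrightarrow> \<Phi> x > 0"
proof -
  assume "x \<noteq> 0"
  obtain c where c: "c > 0" "\<forall>x. \<Phi> x \<ge> c * norm x" using N unfolding is_norm_def by blast
  have "c * norm x > 0" using c \<open>x \<noteq> 0\<close> by simp
  with c show ?thesis by (meson less_le_trans)
qed

lemma n_bdd: "bdd_above ((\<lambda>x. y \<bullet> x) ` {x. \<Phi> x \<le> 1})"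
proof -
  obtain c where c: "c > 0" "\<forall>x. \<Phi> x \<ge> c * norm x" using N unfolding is_norm_def by blast
  have "y \<bullet> x \<le> norm y / c" if "\<Phi> x \<le> 1" for x
  proof -
    have "norm x \<le> 1 / c" using c that by (smt (verit) divide_inverse le_divide_eq mult.commute)
    hence "norm y * norm x \<le> norm y * (1/c)" by (intro mult_left_mono) auto
    moreover have "y \<bullet> x \<le> norm y * norm x" using Cauchy_Schwarz_ineq2 by (metis norm_cauchy_schwarz)
    ultimately show ?thesis by (simp add: divide_inverse)
  qed
  thus ?thesis unfolding bdd_above_def by blast
qed

lemma n_upper: "\<Phi> x \<le> 1 \<Longrightarrow> z \<bullet> x \<le> dual_norm \<Phi> z"
  unfolding dual_norm_def by (rule cSUP_upper[OF _ n_bdd]) simp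

lemma n_dual_nonneg: "dual_norm \<Phi> z \<ge> 0"
  using n_upper[of 0 z] n_zero by simp

lemma n_ineq: "z \<bullet> x \<le> dual_norm \<Phi> z * \<Phi> x"
proof (cases "x = 0")
  case True thus ?thesis by (simp add: n_zero)
next
  case False
  hence p: "\<Phi> x > 0" by (rule n_pos)
  have "\<Phi> ((1 / \<Phi> x) *\<^sub>R x) = 1" using p by (simp add: n_hom)
  hence "z \<bullet> ((1 / \<Phi> x) *\<^sub>R x) \<le> dual_norm \<Phi> z" using n_upper by (simp del: inner_scaleR_right)
  hence "(z \<bullet> x) / \<Phi> x \<le> dual_norm \<Phi> z" by simp
  thus ?thesis using p by (simp add: divide_le_eq mult.commute)
qed

lemma n_dual_le1: "(\<And>x. \<Phi> x \<le> 1 \<Longrightarrow> y \<bullet> x \<le> 1) \<Longrightarrow> dual_norm \<Phi> y \<le> 1"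
  unfolding dual_norm_def
  by (rule cSUP_least) (auto intro: exI[of _ 0] simp: n_zero)

lemma n_support: "\<exists>y. dual_norm \<Phi> y \<le> 1 \<and> y \<bullet> x = \<Phi> x"
proof (cases "x = 0")
  case True
  have "dual_norm \<Phi> 0 \<le> 1" by (rule n_dual_le1) simp
  thus ?thesis using True n_zero by auto
next
  case False
  hence p: "\<Phi> x > 0" by (rule n_pos)
  define x0 where "x0 = (1 / \<Phi> x) *\<^sub>R x"
  have x0: "\<Phi> x0 = 1" using p by (simp add: n_hom x0_def)
  have cv: "convex {x. \<Phi> x < 1}"
    unfolding convex_def
  proof (intro allI impI ballI, clarsimp)
    fix u v :: real and a b
    assume "\<Phi> a < 1" "\<Phi> b < 1" "0 \<le> u" "0 \<le> v" "u + v = 1"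
    have "\<Phi> (u *\<^sub>R a + v *\<^sub>R b) \<le> u * \<Phi> a + v * \<Phi> b"
      using N \<open>0 \<le> u\<close> \<open>0 \<le> v\<close> \<open>u + v = 1\<close> unfolding is_norm_def convex_on_def by auto
    also have "\<dots> < 1"
    proof (cases "u = 0")
      case True thus ?thesis using \<open>u+v=1\<close> \<open>\<Phi> b < 1\<close> by simp
    next
      case False
      hence "u * \<Phi> a < u" using \<open>0 \<le> u\<close> \<open>\<Phi> a < 1\<close> by simp
      moreover have "v * \<Phi> b \<le> v" using \<open>0 \<le> v\<close> \<open>\<Phi> b < 1\<close> by (simp add: mult_left_le)
      ultimately show ?thesis using \<open>u+v=1\<close> by linarith
    qed
    finally show "\<Phi> (u *\<^sub>R a + v *\<^sub>R b) < 1" .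
  qed
  obtain a b where ab: "a \<noteq> 0" "\<forall>z\<in>{x. \<Phi> x < 1}. a \<bullet> z \<le> b" "\<forall>z\<in>{x0}. a \<bullet> z \<ge> b"
    using separating_hyperplane_sets[OF cv convex_singleton, of x0] x0 n_zero by force
  have ax0: "a \<bullet> x0 > 0"
  proof -
    define e where "e = 1 / (\<Phi> a + 1)"
    have e: "e > 0" using n_nonneg[of a] by (simp add: e_def)
    have "\<Phi> (e *\<^sub>R a) = e * \<Phi> a" using e by (simp add: n_hom)
    also have "\<dots> < 1" using n_nonneg[of a] by (simp add: e_def divide_less_eq)
    finally have "a \<bullet> (e *\<^sub>R a) \<le> b" using ab(2) by (simp del: inner_scaleR_right)
    moreover have "a \<bullet> (e *\<^sub>R a) > 0" using e ab(1) by simp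
    ultimately show ?thesis using ab(3) by simp
  qed
  define y where "y = (1 / (a \<bullet> x0)) *\<^sub>R a"
  have le: "a \<bullet> z \<le> a \<bullet> x0" if "\<Phi> z \<le> 1" for z
  proof (rule ccontr)
    assume "\<not> ?thesis"
    hence gt: "a \<bullet> z > a \<bullet> x0" by simp
    define r where "r = (a \<bullet> x0 / (a \<bullet> z) + 1) / 2"
    have az: "a \<bullet> z > 0" using gt ax0 by simp
    have q: "a \<bullet> x0 / (a \<bullet> z) < 1" using gt az by (simp add: divide_less_eq)
    have "a \<bullet> x0 / (a \<bullet> z) > 0" using ax0 az by simp
    hence r0: "r > 0" "r < 1" using q by (auto simp: r_def)
    have "\<Phi> (r *\<^sub>R z) = r * \<Phi> z" using r0 by (simp add: n_hom)
    also have "\<dots> < 1" using r0 that n_nonneg[of z]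
      by (smt (verit) mult_left_le)
    finally have "a \<bullet> (r *\<^sub>R z) \<le> b" using ab(2) by (simp del: inner_scaleR_right)
    hence "r * (a \<bullet> z) \<le> a \<bullet> x0" using ab(3) by simp
    moreover have "r * (a \<bullet> z) > a \<bullet> x0"
    proof -
      have "r * (a \<bullet> z) = (a \<bullet> x0 + a \<bullet> z) / 2" using az by (simp add: r_def field_simps)
      thus ?thesis using gt by simp
    qed
    ultimately show False by simp
  qed
  have "dual_norm \<Phi> y \<le> 1"
    by (rule n_dual_le1) (use le ax0 in \<open>simp add: y_def divide_le_eq\<close>)
  moreover have "y \<bullet> x0 = 1" using ax0 by (simp add: y_def)
  hence "y \<bullet> x = \<Phi> x" using p by (simp add: x0_def)
  ultimately show ?thesis by blast
qed

end

theorem lemmaA3: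
  fixes \<Phi> :: "(real ^ 'n) \<times> real \<Rightarrow> real"
  assumes "is_norm \<Phi>"
  shows "(\<forall>\<xi>h t. \<Phi> (\<xi>h, t) \<ge> \<Phi> (\<xi>h, 0)) \<longleftrightarrow>
         (\<forall>\<xi>h t. dual_norm \<Phi> (\<xi>h, t) \<ge> dual_norm \<Phi> (\<xi>h, 0))"
proof
  assume A: "\<forall>\<xi>h t. \<Phi> (\<xi>h, t) \<ge> \<Phi> (\<xi>h, 0)"
  show "\<forall>\<xi>h t. dual_norm \<Phi> (\<xi>h, t) \<ge> dual_norm \<Phi> (\<xi>h, 0)"
  proof (intro allI)
    fix h and t :: real
    show "dual_norm \<Phi> (h, t) \<ge> dual_norm \<Phi> (h, 0)"
      unfolding dual_norm_def[of \<Phi> "(h,0)"]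
    proof (rule cSUP_least)
      have "(0::(real^'n)\<times>real) \<in> {x. \<Phi> x \<le> 1}" using n_zero[OF assms] by simp
      thus "{x. \<Phi> x \<le> 1} \<noteq> {}" by blast
    next
      fix x assume "x \<in> {x. \<Phi> x \<le> 1}"
      then obtain h' t' where x: "x = (h', t')" "\<Phi> (h', t') \<le> 1" by (cases x) auto
      have "(h, 0) \<bullet> x = (h, t) \<bullet> (h', 0)" using x by simp
      also have "\<dots> \<le> dual_norm \<Phi> (h, t) * \<Phi> (h', 0)" by (rule n_ineq[OF assms])
      also have "\<dots> \<le> dual_norm \<Phi> (h, t) * 1"
        using A x n_dual_nonneg[OF assms] by (meson mult_left_mono order_trans)
      finally show "(h, 0) \<bullet> x \<le> dual_norm \<Phi> (h, t)" by simp
    qed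
  qed
next
  assume B: "\<forall>\<xi>h t. dual_norm \<Phi> (\<xi>h, t) \<ge> dual_norm \<Phi> (\<xi>h, 0)"
  show "\<forall>\<xi>h t. \<Phi> (\<xi>h, t) \<ge> \<Phi> (\<xi>h, 0)"
  proof (intro allI)
    fix h and t :: real
    obtain y where y: "dual_norm \<Phi> y \<le> 1" "y \<bullet> (h, 0) = \<Phi> (h, 0)"
      using n_support[OF assms] by blast
    obtain a b where yab: "y = (a, b)" by (cases y)
    have "\<Phi> (h, 0) = (a, 0) \<bullet> (h, t)" using y yab by simp
    also have "\<dots> \<le> dual_norm \<Phi> (a, 0) * \<Phi> (h, t)" by (rule n_ineq[OF assms])
    also have "\<dots> \<le> 1 * \<Phi> (h, t)"
      using B y yab n_nonneg[OF assms] by (meson mult_right_mono order_trans)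
    finally show "\<Phi> (h, t) \<ge> \<Phi> (h, 0)" by simp
  qed
qed

end
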